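(* Let $\mathcal{P}\subseteq[0,1]^n$ be a polytope with $\mathcal{P}\cap(0,1)^n\neq\emptyset$. If the interior of $\mathcal{P}$ is the unique open face of $\mathcal{P}$ contained in $(0,1)^n$, then $\mathcal{P}=[0,1]^n\cap\mathcal{H}$ for some affine subspace $\mathcal{H}\subseteq\mathbb{R}^n$.
   Context: A face of $\mathcal{P}$ is a set of the form $F=\arg\max_{p\in\mathcal{P}}w^Tp$ for some $w\in\mathbb{R}^n$ (taking $w=0$ gives $\mathcal{P}$ itself); its dimension is that of its affine span. The open face $\tilde F$ corresponding to a face $F$ is the set of points of $F$ that belong to no face of $\mathcal{P}$ of lower dimension. The interior of $\mathcal{P}$ means the open face corresponding to the face $\mathcal{P}$ itself (its relative interior). *)

theory Defs
  imports "HOL-Analysis.Analysis"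
begin

text \<open>Faces in the paper's sense: argmax sets of linear functionals (w = 0 gives P itself).\<close>
definition is_lin_face :: "(real^'n) set \<Rightarrow> (real^'n) set \<Rightarrow> bool" where
  "is_lin_face P F \<longleftrightarrow> (\<exists>w::real^'n. F = {p \<in> P. \<forall>q \<in> P. w \<bullet> q \<le> w \<bullet> p})"

definition open_face :: "(real^'n) set \<Rightarrow> (real^'n) set \<Rightarrow> (real^'n) set" where
  "open_face P F = {x \<in> F. \<not> (\<exists>G. is_lin_face P G \<and> aff_dim G < aff_dim F \<and> x \<in> G)}"

definition unit_cube :: "(real^'n) set" where
  "unit_cube = {x. \<forall>i. 0 \<le> x $ i \<and> x $ i \<le> 1}"

definition open_unit_cube :: "(real^'n) set" where
  "open_unit_cube = {x. \<forall>i. 0 < x $ i \<and> x $ i < 1}"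

end

theory Submission
  imports Defs
begin

lemma face_imp_lin_face:
  fixes P :: "(real^'n) set"
  assumes "polytope P" "F face_of P" "F \<noteq> {}"
  shows "is_lin_face P F"
proof -
  have "F exposed_face_of P"
    using assms exposed_face_of_polyhedron polytope_imp_polyhedron by blast
  then obtain a b where ab: "P \<subseteq> {x. a \<bullet> x \<le> b}" "F = P \<inter> {x. a \<bullet> x = b}"
    unfolding exposed_face_of_def by blast
  obtain f where f: "f \<in> F" using assms(3) by blast
  have "F = {p \<in> P. \<forall>q \<in> P. a \<bullet> q \<le> a \<bullet> p}"
  proof
    show "F \<subseteq> {p \<in> P. \<forall>q \<in> P. a \<bullet> q \<le> a \<bullet> p}" using ab by auto
    show "{p \<in> P. \<forall>q \<in> P. a \<bullet> q \<le> a \<bullet> p} \<subseteq> F"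
    proof
      fix p assume p: "p \<in> {p \<in> P. \<forall>q \<in> P. a \<bullet> q \<le> a \<bullet> p}"
      have "a \<bullet> f = b" "f \<in> P" using f ab by auto
      then have "b \<le> a \<bullet> p" using p by auto
      moreover have "a \<bullet> p \<le> b" using p ab by auto
      ultimately show "p \<in> F" using p ab by auto
    qed
  qed
  then show ?thesis unfolding is_lin_face_def by blast
qed

lemma lin_face_imp_face:
  fixes P :: "(real^'n) set"
  assumes "convex P" "is_lin_face P F"
  shows "F face_of P"
proof (cases "F = {}")
  case True then show ?thesis by simp
next
  case False
  obtain w where w: "F = {p \<in> P. \<forall>q \<in> P. w \<bullet> q \<le> w \<bullet> p}"
    using assms(2) unfolding is_lin_face_def by blast
  obtain f where f: "f \<in> F" using False by blast
  have "F = P \<inter> {x. w \<bullet> x = w \<bullet> f}"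
    using f w by (auto intro: order_antisym)
  moreover have "(P \<inter> {x. w \<bullet> x = w \<bullet> f}) face_of P"
    using f w assms(1) by (intro face_of_Int_supporting_hyperplane_le) auto
  ultimately show ?thesis by simp
qed

theorem lemmaB6:
  fixes P :: "(real^'n) set"
  assumes "polytope P"
    and "P \<subseteq> unit_cube"
    and "P \<inter> open_unit_cube \<noteq> {}"
    and "open_face P P \<subseteq> open_unit_cube"
    and "\<forall>F. is_lin_face P F \<and> open_face P F \<subseteq> open_unit_cube \<longrightarrow> open_face P F = open_face P P"
  shows "\<exists>H. affine H \<and> P = unit_cube \<inter> H"
proof (rule ccontr)
  assume nH: "\<not> ?thesis"
  have cvx: "convex P" using assms(1) polytope_imp_convex by blast
  have cpt: "compact P" using assms(1) polytope_imp_compact by blast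
  have "P \<noteq> unit_cube \<inter> affine hull P" using nH affine_affine_hull by blast
  moreover have "P \<subseteq> unit_cube \<inter> affine hull P"
    using assms(2) hull_subset[of P affine] by (simp add: le_inf_iff)
  ultimately have "unit_cube \<inter> affine hull P - P \<noteq> {}" by blast
  then obtain y where y: "y \<in> unit_cube" "y \<in> affine hull P" "y \<notin> P"
    by (meson DiffE IntD1 IntD2 ex_in_conv)
  obtain x where x: "x \<in> P" "x \<in> open_unit_cube" using assms(3) by blast
  define T where "T = {t \<in> {0..1::real}. x + t *\<^sub>R (y - x) \<in> P}"
  have "T = {0..1} \<inter> (\<lambda>t. x + t *\<^sub>R (y - x)) -` P" unfolding T_def by auto
  moreover have "closed ((\<lambda>t. x + t *\<^sub>R (y - x)) -` P)"
    by (intro closed_vimage compact_imp_closed cpt) (intro continuous_intros)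
  ultimately have "closed T" by (simp add: closed_Int)
  moreover have "bounded T" unfolding T_def by (rule bounded_subset[of "{0..1}"]) auto
  ultimately have "compact T" using compact_eq_bounded_closed by blast
  moreover have "0 \<in> T" using x unfolding T_def by auto
  ultimately have "\<exists>s\<in>T. \<forall>t\<in>T. t \<le> s" by (intro compact_attains_sup) auto
  then obtain t0 where t0: "t0 \<in> T" "\<And>t. t \<in> T \<Longrightarrow> t \<le> t0"
    by blast
  define z where "z = x + t0 *\<^sub>R (y - x)"
  have zP: "z \<in> P" using t0 unfolding T_def z_def by auto
  have t01: "0 \<le> t0" "t0 < 1"
  proof -
    show "0 \<le> t0" using t0 unfolding T_def by auto
    have "t0 \<le> 1" using t0 unfolding T_def by auto
    moreover have "t0 \<noteq> 1" using t0 y(3) unfolding T_def by auto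
    ultimately show "t0 < 1" by simp
  qed
  have zcube: "0 < z $ i \<and> z $ i < 1" for i
  proof -
    have xi: "0 < x $ i" "x $ i < 1" using x(2) unfolding open_unit_cube_def by auto
    have yi: "0 \<le> y $ i" "y $ i \<le> 1" using y(1) unfolding unit_cube_def by auto
    have "z $ i = (1 - t0) * x $ i + t0 * y $ i" unfolding z_def by (simp add: algebra_simps)
    moreover have "0 < (1 - t0) * x $ i" using xi t01 by simp
    moreover have "0 \<le> t0 * y $ i" using yi t01 by simp
    moreover have "(1 - t0) * x $ i < 1 - t0" using xi t01 by simp
    moreover have "t0 * y $ i \<le> t0" using yi t01 by (simp add: mult_left_le)
    ultimately show ?thesis by linarith
  qed
  have znri: "z \<notin> rel_interior P"
  proof
    assume "z \<in> rel_interior P"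
    then obtain e where e: "e > 0" "ball z e \<inter> affine hull P \<subseteq> P"
      using mem_rel_interior_ball by blast
    have yx: "y \<noteq> x" using x(1) y(3) by metis
    define s where "s = min (1 - t0) (e / (2 * norm (y - x)))"
    have np: "norm (y - x) > 0" using yx by simp
    have s0: "s > 0" unfolding s_def using t01 e np by simp
    have "x + (t0 + s) *\<^sub>R (y - x) \<in> ball z e"
    proof -
      have "z - (x + (t0 + s) *\<^sub>R (y - x)) = - (s *\<^sub>R (y - x))"
        unfolding z_def by (simp add: algebra_simps)
      then have "dist z (x + (t0 + s) *\<^sub>R (y - x)) = s * norm (y - x)"
        unfolding dist_norm using s0 by simp
      also have "\<dots> \<le> e / (2 * norm (y - x)) * norm (y - x)"
        by (rule mult_right_mono) (auto simp: s_def)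
      also have "\<dots> = e / 2" using np by simp
      finally show ?thesis using e by simp
    qed
    moreover have "x + (t0 + s) *\<^sub>R (y - x) \<in> affine hull P"
    proof -
      have "x \<in> affine hull P" using x(1) by (rule hull_inc)
      have "x + (t0 + s) *\<^sub>R (y - x) = (1 - (t0 + s)) *\<^sub>R x + (t0 + s) *\<^sub>R y"
        by (simp add: algebra_simps)
      moreover have "(1 - (t0 + s)) *\<^sub>R x + (t0 + s) *\<^sub>R y \<in> affine hull P"
        by (rule mem_affine[OF affine_affine_hull \<open>x \<in> affine hull P\<close> y(2)]) simp
      ultimately show ?thesis by simp
    qed
    ultimately have "x + (t0 + s) *\<^sub>R (y - x) \<in> P" using e(2) by (meson IntI subsetD)
    moreover have "t0 + s \<le> 1" unfolding s_def by linarith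
    ultimately have "t0 + s \<in> T" unfolding T_def using t01 s0 by auto
    from t0(2)[OF this] s0 show False by linarith
  qed
  moreover have "closure P = P" using cpt by (simp add: compact_imp_closed closure_closed)
  ultimately have "z \<in> rel_frontier P" using zP by (simp add: rel_frontier_def)
  then obtain G where G: "G face_of P" "G \<noteq> P" "z \<in> G"
    using rel_frontier_of_polyhedron_alt[OF polytope_imp_polyhedron[OF assms(1)]] by blast
  have Glin: "is_lin_face P G" using face_imp_lin_face[OF assms(1) G(1)] G(3) by blast
  have Gdim: "aff_dim G < aff_dim P" using face_of_aff_dim_lt[OF cvx G(1) G(2)] .
  have zopen: "z \<notin> open_face P P" unfolding open_face_def using Glin Gdim G(3) by blast
  have "is_lin_face P P" unfolding is_lin_face_def by (rule exI[of _ 0]) simp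
  then have PP: "is_lin_face P P \<and> z \<in> P" using zP by blast
  have "\<exists>F. (is_lin_face P F \<and> z \<in> F) \<and> (\<forall>G. is_lin_face P G \<and> z \<in> G \<longrightarrow> nat (aff_dim F + 1) \<le> nat (aff_dim G + 1))"
    by (rule ex_has_least_nat[where m = "\<lambda>F. nat (aff_dim F + 1)" and P = "\<lambda>F. is_lin_face P F \<and> z \<in> F", OF PP])
  then obtain F where F: "is_lin_face P F" "z \<in> F"
    and Fmin0: "\<forall>G. is_lin_face P G \<and> z \<in> G \<longrightarrow> nat (aff_dim F + 1) \<le> nat (aff_dim G + 1)"
    by blast
  have Fmin: "\<And>G. is_lin_face P G \<and> z \<in> G \<Longrightarrow> nat (aff_dim F + 1) \<le> nat (aff_dim G + 1)"
    using Fmin0 by blast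
  have zF: "z \<in> open_face P F"
  proof -
    have "\<not> (is_lin_face P G' \<and> aff_dim G' < aff_dim F \<and> z \<in> G')" for G'
    proof
      assume a: "is_lin_face P G' \<and> aff_dim G' < aff_dim F \<and> z \<in> G'"
      have "aff_dim G' \<ge> -1" using aff_dim_geq by blast
      then show False using Fmin[of G'] a by linarith
    qed
    then show ?thesis unfolding open_face_def using F by blast
  qed
  have Fface: "F face_of P" using lin_face_imp_face[OF cvx F(1)] .
  have "open_face P F \<subseteq> open_unit_cube"
  proof
    fix x' assume x': "x' \<in> open_face P F"
    have x'F: "x' \<in> F" using x' unfolding open_face_def by blast
    have x'P: "x' \<in> P" using x'F Fface face_of_imp_subset by blast
    show "x' \<in> open_unit_cube"
    proof (rule ccontr)
      assume "x' \<notin> open_unit_cube"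
      then obtain i where i: "\<not> (0 < x' $ i \<and> x' $ i < 1)" unfolding open_unit_cube_def by blast
      have bnd: "\<And>p. p \<in> P \<Longrightarrow> 0 \<le> p $ i \<and> p $ i \<le> 1" using assms(2) unfolding unit_cube_def by blast
      have "x' $ i = 0 \<or> x' $ i = 1" using i bnd[OF x'P] by linarith
      then obtain c where c: "c = 0 \<or> c = (1::real)" "x' $ i = c" by blast
      have G'face: "(P \<inter> {p. axis i 1 \<bullet> p = c}) face_of P"
        using c(1)
      proof
        assume "c = 0" then show ?thesis
          using bnd by (intro face_of_Int_supporting_hyperplane_ge cvx) (auto simp: inner_axis')
      next
        assume "c = 1" then show ?thesis
          using bnd by (intro face_of_Int_supporting_hyperplane_le cvx) (auto simp: inner_axis')
      qed
      define K where "K = F \<inter> (P \<inter> {p. axis i 1 \<bullet> p = c})"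
      have Kface: "K face_of P" unfolding K_def using face_of_Int[OF Fface G'face] .
      have x'K: "x' \<in> K" unfolding K_def using x'F x'P c by (simp add: inner_axis')
      have Klin: "is_lin_face P K" using face_imp_lin_face[OF assms(1) Kface] x'K by blast
      have "K \<subseteq> F" unfolding K_def by blast
      then have KF: "K face_of F" using face_of_subset[OF Kface _ face_of_imp_subset[OF Fface]] by blast
      have "z \<notin> K" unfolding K_def using zcube[of i] c by (auto simp: inner_axis')
      then have "K \<noteq> F" using F(2) by blast
      then have "aff_dim K < aff_dim F"
        using face_of_aff_dim_lt[OF face_of_imp_convex[OF Fface] KF] by blast
      then show False using x' Klin x'K unfolding open_face_def by blast
    qed
  qed
  then have "open_face P F = open_face P P" using assms(5) F(1) by blast
  then show False using zF zopen by simp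
qed

end
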